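(* Let $n$ be an odd prime and $g<n$ a positive integer which is a generator of $U(\mathbb Z/n\mathbb Z)$. Let $C=circ(c_1,\dots,c_n)$ be a real circulant matrix with eigenvalues $\lambda_k=\sum_{\ell=1}^{n}c_\ell\,\omega^{(k-1)(\ell-1)}$, $1\le k\le n$, where $\omega=\cos\frac{2\pi}{n}+i\sin\frac{2\pi}{n}$, and let $A=Q_gC$ (a real $g$-circulant matrix). Then the eigenvalues of $A$ are $$\lambda_1,\ \beta^{\frac{1}{n-1}},\ \beta^{\frac{1}{n-1}}\varphi,\ \beta^{\frac{1}{n-1}}\varphi^2,\ \dots,\ \beta^{\frac{1}{n-1}}\varphi^{n-2},$$ where $\varphi=\cos\frac{2\pi}{n-1}+i\sin\frac{2\pi}{n-1}$ and $\beta=\left(|\lambda_2||\lambda_3|\cdots|\lambda_{\frac{n+1}{2}}|\right)^2$.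
   Context: $circ(c_1,\dots,c_n)$ is the circulant matrix whose $(i,j)$ entry is $c_{j-i+1}$ (subscripts mod $n$ in $\{1,\dots,n\}$). $Q_g$ is the $n\times n$ permutation matrix whose $(i,j)$ entry is $1$ if $j\equiv 1+(i-1)g\pmod n$ and $0$ otherwise. A $g$-circulant matrix is one in which each row is the preceding row cyclically shifted $g$ places to the right; $Q_gC$ is the $g$-circulant matrix with the same first row as $C$. *)

theory Defs
  imports "HOL-Number_Theory.Residue_Primitive_Roots" "Jordan_Normal_Form.Char_Poly"
begin

text \<open>Matrices are n x n Jordan_Normal_Form matrices with 0-based indices; the paper's
  row/column i (1-based) is our row/column i-1. The first row c_1..c_n is given by
  c :: nat => real evaluated at 1..n (1-based, as in the paper).\<close>

definition circ :: "nat \<Rightarrow> (nat \<Rightarrow> real) \<Rightarrow> real mat" where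
  "circ n c = mat n n (\<lambda>(i, j). c ((j + n - i) mod n + 1))"

text \<open>Q_g: paper entry (i,j) is 1 iff j = 1 + (i-1) g (mod n); 0-based: j = i g (mod n).\<close>
definition Qmat :: "nat \<Rightarrow> nat \<Rightarrow> real mat" where
  "Qmat n g = mat n n (\<lambda>(i, j). if j = (i * g) mod n then 1 else 0)"

definition omega :: "nat \<Rightarrow> complex" where
  "omega n = cis (2 * pi / real n)"

definition circ_eig :: "nat \<Rightarrow> (nat \<Rightarrow> real) \<Rightarrow> nat \<Rightarrow> complex" where
  "circ_eig n c k = (\<Sum>l = 1..n. complex_of_real (c l) * omega n ^ ((k - 1) * (l - 1)))"

end

theory Submission
  imports Defs
begin

lemma prod_list_diag:
  "prod_list (map f [0..<k]) = (\<Prod>i<k. f i)"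
  by (simp add: prod.distinct_set_conv_list[symmetric] atLeast0LessThan)

lemma charpoly_cycle:
  fixes w :: "nat \<Rightarrow> 'a::comm_ring_1"
  assumes m2: "m \<ge> 2"
  shows "char_poly (mat m m (\<lambda>(i,j). if i = Suc j mod m then w j else 0))
     = monom 1 m - [:\<Prod>j<m. w j:]"
proof -
  define W where "W = mat m m (\<lambda>(i,j). if i = Suc j mod m then w j else 0)"
  define M where "M = char_poly_matrix W"
  have W: "W \<in> carrier_mat m m" unfolding W_def by simp
  have M: "M \<in> carrier_mat m m" unfolding M_def using W by simp
  have Mij: "M $$ (i,j) = (if i = j then [:0,1:] else 0) - (if i = Suc j mod m then [:w j:] else 0)"
    if "i < m" "j < m" for i j
    using that unfolding M_def W_def char_poly_matrix_def by auto
  have m0: "0 < m" using m2 by simp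
  have "det M = (\<Sum>j<m. M $$ (0,j) * cofactor M 0 j)"
    by (rule laplace_expansion_row[OF M m0])
  also have "\<dots> = (\<Sum>j\<in>{0, m-1}. M $$ (0,j) * cofactor M 0 j)"
  proof (rule sum.mono_neutral_right)
    show "\<forall>j\<in>{..<m} - {0, m - 1}. M $$ (0, j) * cofactor M 0 j = 0"
    proof
      fix j assume j: "j \<in> {..<m} - {0, m - 1}"
      then have "Suc j < m" by auto
      then show "M $$ (0, j) * cofactor M 0 j = 0" using j by (simp add: Mij)
    qed
  qed (use m2 in auto)
  also have "\<dots> = M $$ (0,0) * cofactor M 0 0 + M $$ (0,m-1) * cofactor M 0 (m-1)"
    using m2 by simp
  also have "M $$ (0,0) = [:0,1:]" using m2 by (simp add: Mij)
  also have "M $$ (0,m-1) = - [:w (m-1):]" using m2 by (simp add: Mij)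
  also have "cofactor M 0 0 = [:0,1:] ^ (m-1)"
  proof -
    define D where "D = mat_delete M 0 0"
    have D: "D \<in> carrier_mat (m-1) (m-1)" unfolding D_def using mat_delete_carrier[OF M] .
    have Dij: "D $$ (i,j) = M $$ (Suc i, Suc j)" if "i < m-1" "j < m-1" for i j
      using that M unfolding D_def mat_delete_def by auto
    have "det D = prod_list (diag_mat D)"
    proof (rule det_lower_triangular[OF _ D])
      fix i j assume "i < j" "j < m - 1"
      then show "D $$ (i,j) = 0" using Dij[of i j] Mij[of "Suc i" "Suc j"] m2
        by (cases "Suc (Suc j) = m") auto
    qed
    also have "\<dots> = (\<Prod>i<m-1. D $$ (i,i))" using D unfolding diag_mat_def by (simp add: prod_list_diag)
    also have "\<dots> = (\<Prod>i<m-1. [:0,1:])"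
    proof (rule prod.cong[OF refl])
      fix i assume "i \<in> {..<m-1}"
      then show "D $$ (i,i) = [:0,1:]" using Dij[of i i] Mij[of "Suc i" "Suc i"] m2
        by (cases "Suc (Suc i) = m") auto
    qed
    finally show ?thesis unfolding cofactor_def D_def by simp
  qed
  also have "cofactor M 0 (m-1) = (-1)^(m-1) * (\<Prod>i<m-1. - [:w i:])"
  proof -
    define D where "D = mat_delete M 0 (m-1)"
    have D: "D \<in> carrier_mat (m-1) (m-1)" unfolding D_def using mat_delete_carrier[OF M] .
    have Dij: "D $$ (i,j) = M $$ (Suc i, j)" if "i < m-1" "j < m-1" for i j
      using that M unfolding D_def mat_delete_def by auto
    have ut: "upper_triangular D"
      unfolding upper_triangular_def
    proof (intro allI impI)
      fix i j assume "i < dim_row D" "j < i"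
      then show "D $$ (i,j) = 0" using D Dij[of i j] Mij[of "Suc i" j] by auto
    qed
    have "det D = prod_list (diag_mat D)" by (rule det_upper_triangular[OF ut D])
    also have "\<dots> = (\<Prod>i<m-1. D $$ (i,i))" using D unfolding diag_mat_def by (simp add: prod_list_diag)
    also have "\<dots> = (\<Prod>i<m-1. - [:w i:])"
    proof (rule prod.cong[OF refl])
      fix i assume "i \<in> {..<m-1}"
      then show "D $$ (i,i) = - [:w i:]" using Dij[of i i] Mij[of "Suc i" i] by auto
    qed
    finally show ?thesis unfolding cofactor_def D_def by simp
  qed
  finally have "det M = [:0,1:] * [:0,1:] ^ (m-1) + - [:w (m-1):] * ((-1)^(m-1) * (\<Prod>i<m-1. - [:w i:]))" .
  also have "(\<Prod>i<m-1. - [:w i:]) = (-1)^(m-1) * (\<Prod>i<m-1. [:w i:])"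
    using prod_uminus[of "\<lambda>i. [:w i:]" "{..<m-1}"] by (simp only: card_lessThan)
  also have "[:0,1:] * [:0,1:] ^ (m-1) = (monom 1 m :: 'a poly)"
  proof -
    obtain k where k: "m = Suc k" using m0 by (cases m) auto
    have "[:0,1:] * [:0,1:] ^ (m-1) = ([:0,1:] ^ m :: 'a poly)"
      unfolding k by simp
    then show ?thesis by (simp add: x_as_monom monom_power)
  qed
  finally have dM: "det M = monom 1 m + - [:w (m-1):] * ((-1)^(m-1) * ((-1)^(m-1) * (\<Prod>i<m-1. [:w i:])))" .
  have aa: "(-1::'a poly)^(m-1) * (-1)^(m-1) = 1" 
  proof -
    have "(-1::'a poly)^(m-1) * (-1)^(m-1) = ((-1) * (-1))^(m-1)" by (rule power_mult_distrib[symmetric])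
    then show ?thesis by simp
  qed
  have pp: "[:\<Prod>j<m. w j:] = [:w (m-1):] * (\<Prod>i<m-1. [:w i:])"
    unfolding prod_to_poly[symmetric]
    using m0 by (cases m) (auto simp: mult.commute)
  have "(-1::'a poly)^(m-1) * ((-1)^(m-1) * (\<Prod>i<m-1. [:w i:])) = (\<Prod>i<m-1. [:w i:])"
    by (simp only: mult.assoc[symmetric] aa mult_1)
  then have "det M = monom 1 m - [:\<Prod>j<m. w j:]" unfolding dM pp by simp
  then show ?thesis unfolding M_def W_def char_poly_def .
qed


lemma om_pow: "omega n ^ k = cis (2 * pi * real k / real n)"
  unfolding omega_def DeMoivre by (simp add: field_simps)

lemma om_n: "n > 0 \<Longrightarrow> omega n ^ n = 1"
  unfolding om_pow by simp

lemma om_mod: assumes "n > 0" shows "omega n ^ k = omega n ^ (k mod n)"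
proof -
  have "omega n ^ k = omega n ^ (n * (k div n) + k mod n)" by simp
  also have "\<dots> = (omega n ^ n) ^ (k div n) * omega n ^ (k mod n)"
    by (simp only: power_add power_mult)
  finally show ?thesis using om_n[OF assms] by simp
qed

lemma om_cong: "n > 0 \<Longrightarrow> k mod n = l mod n \<Longrightarrow> omega n ^ k = omega n ^ l"
  by (metis om_mod)

lemma om_eq1: assumes "n > 0" "k < n" "omega n ^ k = 1" shows "k = 0"
proof -
  have inj: "inj_on (\<lambda>k. cis (2 * pi * real k / real n)) {..<n}"
    using bij_betw_roots_unity[OF assms(1)] by (rule bij_betw_imp_inj_on)
  have "cis (2 * pi * real k / real n) = cis (2 * pi * real 0 / real n)"
    using assms(3) unfolding om_pow by simp
  from inj_onD[OF inj this] assms show ?thesis by auto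
qed

lemma om_nz: "omega n ^ k \<noteq> 0"
  unfolding om_pow by (metis cis_neq_zero)

lemma om_cnj: assumes "n > 0" shows "cnj (omega n ^ k) = omega n ^ (k * (n - 1))"
proof -
  let ?z = "omega n ^ k" and ?w = "omega n ^ (k * (n - 1))"
  have zw: "?z * ?w = 1"
  proof -
    have "?z * ?w = omega n ^ (k + k * (n - 1))" by (simp add: power_add)
    also have "k + k * (n - 1) = n * k" using assms by (cases n) auto
    also have "omega n ^ (n * k) = 1" by (simp add: power_mult om_n[OF assms])
    finally show ?thesis .
  qed
  have nz: "cnj ?z * ?z = 1"
  proof -
    have "cmod ?z = 1" unfolding om_pow by simp
    then show ?thesis using complex_norm_square[of ?z] by (simp add: mult.commute)
  qed
  have "cnj ?z = cnj ?z * (?z * ?w)" using zw by simp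
  also have "\<dots> = ?w" by (simp only: mult.assoc[symmetric] nz mult_1)
  finally show ?thesis .
qed

lemma arith_orth: assumes "a < (n::nat)" "b < n" "(a * (n - 1) + b) mod n = 0" shows "a = b"
proof -
  have n0: "n > 0" using assms by auto
  have e: "a * (n - 1) + b + a = b + n * a" using n0 by (cases n) (auto simp: algebra_simps)
  have "(a * (n - 1) + b + a) mod n = b" unfolding e using assms by simp
  moreover have "(a * (n - 1) + b + a) mod n = a mod n"
    by (metis assms(3) add.commute add.right_neutral mod_add_right_eq)
  ultimately show ?thesis using assms by simp
qed

lemma om_orth: assumes "n > 0" "a < n" "b < n"
  shows "(\<Sum>i<n. cnj (omega n ^ (i * a)) * omega n ^ (i * b)) = (if a = b then of_nat n else 0)"
proof -
  define z where "z = omega n ^ (a * (n - 1) + b)"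
  have t: "cnj (omega n ^ (i * a)) * omega n ^ (i * b) = z ^ i" for i
    unfolding om_cnj[OF assms(1)] z_def power_mult[symmetric] power_add[symmetric]
    by (simp add: algebra_simps)
  show ?thesis
  proof (cases "a = b")
    case True
    have "z = 1" unfolding z_def True
    proof -
      have "b * (n - 1) + b = n * b" using assms by (cases n) (auto simp: algebra_simps)
      then show "omega n ^ (b * (n - 1) + b) = 1" by (simp add: power_mult om_n[OF assms(1)])
    qed
    then show ?thesis unfolding t using True by simp
  next
    case False
    have z1: "z \<noteq> 1"
    proof
      assume "z = 1"
      then have "omega n ^ ((a * (n - 1) + b) mod n) = 1" unfolding z_def using om_mod[OF assms(1)] by metis
      from om_eq1[OF assms(1) _ this] assms(1) have "(a * (n - 1) + b) mod n = 0" by simp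
      from arith_orth[OF assms(2,3) this] False show False by simp
    qed
    have zn: "z ^ n = 1" unfolding z_def power_mult[symmetric]
      by (simp add: mult.commute[of _ n] power_mult om_n[OF assms(1)])
    have "(\<Sum>i<n. z ^ i) = 0" using geometric_sum[OF z1, of n] zn by simp
    then show ?thesis unfolding t using False by simp
  qed
qed


lemma prod_roots_pow:
  fixes r :: real and m :: nat
  assumes m0: "m > 0" and r0: "r \<ge> 0"
  shows "(\<Prod>j<m. [:- (complex_of_real r * omega m ^ j), 1:]) = monom 1 m - [:complex_of_real (r ^ m):]"
proof (cases "r = 0")
  case True
  have "(\<Prod>j<m. [:- (complex_of_real r * omega m ^ j), 1:]) = [:0,1:] ^ m" using True by simp
  also have "\<dots> = monom 1 m" by (simp add: x_as_monom monom_power)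
  finally show ?thesis using True m0 by simp
next
  case False
  define a where "a j = complex_of_real r * omega m ^ j" for j
  define p :: "complex poly" where "p = monom 1 m - [:complex_of_real (r ^ m):]"
  have p_alt: "p = monom 1 m + [:- complex_of_real (r ^ m):]" unfolding p_def by simp
  have dp: "degree p = m" unfolding p_alt using m0
    by (subst degree_add_eq_left) (auto simp: degree_monom_eq)
  have lp: "coeff p (degree p) = 1" unfolding dp unfolding p_alt using m0 by (cases m) (auto simp: coeff_pCons)
  obtain as where as: "smult (coeff p (degree p)) (\<Prod>a\<leftarrow>as. [:- a, 1:]) = p" "length as = degree p"
    using fundamental_theorem_algebra_factorized[of p] by blast
  have pas: "p = (\<Prod>a\<leftarrow>as. [:- a, 1:])" using as(1) lp by simp
  have las: "length as = m" using as(2) dp by simp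
  have inj: "inj_on a {..<m}"
  proof -
    have inj1: "inj_on (\<lambda>k. cis (2 * pi * real k / real m)) {..<m}"
      using bij_betw_roots_unity[OF m0] by (rule bij_betw_imp_inj_on)
    show ?thesis
    proof (rule inj_onI)
      fix x y assume xy: "x \<in> {..<m}" "y \<in> {..<m}" "a x = a y"
      then have "omega m ^ x = omega m ^ y" unfolding a_def using False by simp
      then show "x = y" using inj_onD[OF inj1 _ xy(1,2)] unfolding om_pow by simp
    qed
  qed
  have roots: "a j \<in> set as" if "j < m" for j
  proof -
    have "a j ^ m = complex_of_real (r ^ m)"
      unfolding a_def power_mult_distrib power_mult[symmetric]
      by (simp add: mult.commute[of j m] power_mult om_n[OF m0])
    then have "poly p (a j) = 0" unfolding p_def by (simp add: poly_monom)
    then have "(\<Prod>x\<leftarrow>as. a j - x) = 0" unfolding pas poly_prod_list by (simp add: o_def)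
    then show ?thesis by (auto simp: prod_list_zero_iff)
  qed
  have sub: "a ` {..<m} \<subseteq> set as" using roots by auto
  have ca: "card (a ` {..<m}) = m" using card_image[OF inj] by simp
  have "card (set as) \<le> m" using card_length[of as] las by simp
  then have seq: "a ` {..<m} = set as" using card_subset_eq[OF _ sub] ca
    by (metis List.finite_set card_mono le_antisym sub)
  have dist: "distinct as" using card_distinct[of as] seq ca las by simp
  have "p = (\<Prod>x\<in>set as. [:- x, 1:])" unfolding pas by (rule prod.distinct_set_conv_list[OF dist, symmetric])
  also have "\<dots> = (\<Prod>j<m. [:- a j, 1:])" unfolding seq[symmetric] prod.reindex[OF inj] by simp
  finally show ?thesis unfolding a_def p_def by simp
qed


lemma mult_entry: "A \<in> carrier_mat n n \<Longrightarrow> B \<in> carrier_mat n n \<Longrightarrow> i < n \<Longrightarrow> j < n \<Longrightarrow>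
  (A * B) $$ (i,j) = (\<Sum>r<n. A $$ (i,r) * B $$ (r,j))"
  by (simp add: scalar_prod_def atLeast0LessThan)

lemma Aent: assumes "i < n" "j < n"
  shows "map_mat complex_of_real (Qmat n g * circ n c) $$ (i,j)
         = complex_of_real (c ((j + n - i * g mod n) mod n + 1))"
proof -
  have n0: "n > 0" using assms by simp
  have "(Qmat n g * circ n c) $$ (i,j) = (\<Sum>r<n. Qmat n g $$ (i,r) * circ n c $$ (r,j))"
    by (rule mult_entry) (use assms in \<open>auto simp: Qmat_def circ_def\<close>)
  also have "\<dots> = (\<Sum>r<n. if r = i * g mod n then circ n c $$ (r,j) else 0)"
    by (rule sum.cong) (use assms in \<open>auto simp: Qmat_def\<close>)
  also have "\<dots> = circ n c $$ (i * g mod n, j)" using n0 by simp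
  also have "\<dots> = c ((j + n - i * g mod n) mod n + 1)" using assms n0 by (simp add: circ_def)
  finally show ?thesis using assms by (simp add: Qmat_def circ_def)
qed

lemma bw1: assumes "r < (n::nat)" "j < n" shows "((j + n - r) mod n + r) mod n = j"
proof -
  have "((j + n - r) mod n + r) mod n = (j + n - r + r) mod n" by (rule mod_add_left_eq)
  also have "j + n - r + r = j + n" using assms by simp
  finally show ?thesis using assms by simp
qed

lemma bw2: assumes "r < (n::nat)" "x < n" shows "((x + r) mod n + n - r) mod n = x"
proof (cases "x + r < n")
  case True
  then have "(x + r) mod n + n - r = x + n" by simp
  then show ?thesis using assms by simp
next
  case False
  then have "(x + r) mod n = x + r - n" using assms by (simp add: le_mod_geq)
  then have "(x + r) mod n + n - r = x" using False by simp
  then show ?thesis using assms by simp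
qed

lemma key: assumes "i < n"
  shows "(\<Sum>j<n. map_mat complex_of_real (Qmat n g * circ n c) $$ (i,j) * omega n ^ (j * k))
        = circ_eig n c (k + 1) * omega n ^ (i * g * k)"
proof -
  have n0: "n > 0" using assms by simp
  define r where "r = i * g mod n"
  have r: "r < n" unfolding r_def using n0 by simp
  define F where "F j = complex_of_real (c ((j + n - r) mod n + 1)) * omega n ^ (j * k)" for j
  define H where "H l = complex_of_real (c l) * omega n ^ (k * (l - 1)) * omega n ^ (i * g * k)" for l
  have "(\<Sum>j<n. map_mat complex_of_real (Qmat n g * circ n c) $$ (i,j) * omega n ^ (j * k))
      = (\<Sum>j<n. F j)"
    unfolding F_def by (rule sum.cong) (use assms in \<open>auto simp: Aent r_def\<close>)
  also have "\<dots> = (\<Sum>l\<in>{1..n}. H l)"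
  proof (rule sum.reindex_bij_witness[where j = "\<lambda>j. (j + n - r) mod n + 1" and i = "\<lambda>l. (l - 1 + r) mod n"])
    fix j assume j: "j \<in> {..<n}"
    show "((j + n - r) mod n + 1 - 1 + r) mod n = j" using bw1[OF r, of j] j by simp
    show "(j + n - r) mod n + 1 \<in> {1..n}" using n0 by (simp add: Suc_leI)
    have "(k * ((j + n - r) mod n) + i * g * k) mod n = (j * k) mod n"
    proof -
      have e1: "(k * ((j + n - r) mod n)) mod n = (k * (j + n - r)) mod n" by (rule mod_mult_right_eq)
      have e2: "(i * g * k) mod n = (k * r) mod n" unfolding r_def
        by (metis mod_mult_right_eq mult.commute)
      have "(k * ((j + n - r) mod n) + i * g * k) mod n = (k * (j + n - r) + k * r) mod n"
        using mod_add_cong[OF e1 e2] .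
      also have "k * (j + n - r) + k * r = k * j + n * k"
      proof -
        have "j + n - r + r = j + n" using r by simp
        then have "k * (j + n - r + r) = k * (j + n)" by simp
        then show ?thesis by (simp only: add_mult_distrib2 mult.commute)
      qed
      also have "(k * j + n * k) mod n = (j * k) mod n" by (simp add: mult.commute)
      finally show ?thesis .
    qed
    then have "omega n ^ (k * ((j + n - r) mod n) + i * g * k) = omega n ^ (j * k)"
      by (rule om_cong[OF n0])
    then have "omega n ^ (k * ((j + n - r) mod n)) * omega n ^ (i * g * k) = omega n ^ (j * k)"
      by (simp only: power_add)
    then show "H ((j + n - r) mod n + 1) = F j"
      unfolding H_def F_def by (simp add: mult.assoc)
  next
    fix l assume l: "l \<in> {1..n}"
    then have "l - 1 < n" by auto
    from bw2[OF r this] show "((l - 1 + r) mod n + n - r) mod n + 1 = l" using l by simp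
    show "(l - 1 + r) mod n \<in> {..<n}" using n0 by simp
  qed
  also have "\<dots> = circ_eig n c (k + 1) * omega n ^ (i * g * k)"
    unfolding circ_eig_def sum_distrib_right H_def by (simp add: mult.commute)
  finally show ?thesis .
qed


definition kk :: "nat \<Rightarrow> nat \<Rightarrow> nat \<Rightarrow> nat" where
  "kk n g t = (if t = 0 then 0 else g ^ (t - 1) mod n)"
definition Pm :: "nat \<Rightarrow> nat \<Rightarrow> complex mat" where
  "Pm n g = mat n n (\<lambda>(i,t). omega n ^ (i * kk n g t))"
definition Qm :: "nat \<Rightarrow> nat \<Rightarrow> complex mat" where
  "Qm n g = mat n n (\<lambda>(t,i). cnj (omega n ^ (i * kk n g t)) / of_nat n)"
definition ww :: "nat \<Rightarrow> nat \<Rightarrow> (nat \<Rightarrow> real) \<Rightarrow> nat \<Rightarrow> complex" where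
  "ww n g c j = circ_eig n c (g ^ j mod n + 1)"
definition Bm :: "nat \<Rightarrow> nat \<Rightarrow> (nat \<Rightarrow> real) \<Rightarrow> complex mat" where
  "Bm n g c = mat n n (\<lambda>(s,t). if t = 0 then (if s = 0 then circ_eig n c 1 else 0)
      else if s = Suc (t mod (n - 1)) then ww n g c (t - 1) else 0)"

context
  fixes n g :: nat
  assumes pn: "prime n" and on: "odd n" and g0: "0 < g" and gn: "g < n"
    and pr: "residue_primroot n g"
begin

lemma n3: "n \<ge> 3"
proof -
  have "n \<ge> 2" using prime_ge_2_nat[OF pn] .
  moreover have "n \<noteq> 2" using on by auto
  ultimately show ?thesis by simp
qed

lemma gen_bij: "bij_betw (\<lambda>i. g ^ i mod n) {..<n-1} {0<..<n}"
proof -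
  have "n > 1" using n3 by simp
  from residue_primroot_is_generator[OF this pr] show ?thesis
    by (simp add: totient_prime[OF pn] totatives_prime[OF pn])
qed

lemma kk_lt: "t < n \<Longrightarrow> kk n g t < n"
  unfolding kk_def by auto

lemma kk_pos: assumes "0 < t" "t < n" shows "0 < kk n g t"
proof -
  have "t - 1 \<in> {..<n-1}" using assms by auto
  from bij_betw_apply[OF gen_bij this] show ?thesis using assms unfolding kk_def by simp
qed

lemma kk_inj: assumes "s < n" "t < n" "kk n g s = kk n g t" shows "s = t"
proof (cases "s = 0 \<or> t = 0")
  case True
  have k0: "kk n g 0 = 0" by (simp add: kk_def)
  show ?thesis
  proof (cases "s = 0")
    case True
    then show ?thesis using kk_pos[of t] assms k0 by (metis less_irrefl neq0_conv)
  next
    case False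
    then have "t = 0" using \<open>s = 0 \<or> t = 0\<close> by simp
    then show ?thesis using kk_pos[of s] assms k0 False by (metis less_irrefl neq0_conv)
  qed
next
  case False
  then have "s - 1 \<in> {..<n-1}" "t - 1 \<in> {..<n-1}" using assms by auto
  moreover have "g ^ (s - 1) mod n = g ^ (t - 1) mod n" using assms(3) False unfolding kk_def by simp
  ultimately have "s - 1 = t - 1" using bij_betw_imp_inj_on[OF gen_bij] by (meson inj_onD)
  then show ?thesis using False by (cases s; cases t) auto
qed

lemma g_pow_m: "g ^ (n - 1) mod n = 1"
proof -
  have "\<not> n dvd g" using g0 gn by (auto dest: dvd_imp_le)
  from fermat_theorem[OF pn this] have "g ^ (n - 1) mod n = 1 mod n" by (simp add: cong_def)
  then show ?thesis using n3 by simp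
qed

lemma g_pow_mod: assumes "0 < t" "t < n" shows "g ^ t mod n = g ^ (t mod (n - 1)) mod n"
proof (cases "t = n - 1")
  case True
  then show ?thesis using g_pow_m n3 by simp
next
  case False
  then show ?thesis using assms by simp
qed

lemma P_carrier: "Pm n g \<in> carrier_mat n n" unfolding Pm_def by simp
lemma Q_carrier: "Qm n g \<in> carrier_mat n n" unfolding Qm_def by simp
lemma B_carrier: "Bm n g c \<in> carrier_mat n n" unfolding Bm_def by simp

lemma QP: "Qm n g * Pm n g = 1\<^sub>m n"
proof (rule eq_matI)
  have n0: "n > 0" using n3 by simp
  fix s t assume s: "s < dim_row (1\<^sub>m n :: complex mat)" and t: "t < dim_col (1\<^sub>m n :: complex mat)"
  then have s: "s < n" and t: "t < n" by auto
  have "(Qm n g * Pm n g) $$ (s,t) = (\<Sum>i<n. Qm n g $$ (s,i) * Pm n g $$ (i,t))"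
    by (rule mult_entry[OF Q_carrier P_carrier s t])
  also have "\<dots> = (\<Sum>i<n. cnj (omega n ^ (i * kk n g s)) * omega n ^ (i * kk n g t)) / of_nat n"
    unfolding sum_divide_distrib by (rule sum.cong) (use s t in \<open>auto simp: Qm_def Pm_def\<close>)
  also have "\<dots> = (if kk n g s = kk n g t then 1 else 0)"
    using om_orth[OF n0 kk_lt[OF s] kk_lt[OF t]] n0 by simp
  also have "\<dots> = 1\<^sub>m n $$ (s,t)" using kk_inj[OF s t] s t by auto
  finally show "(Qm n g * Pm n g) $$ (s,t) = 1\<^sub>m n $$ (s,t)" .
qed (auto simp: Qm_def Pm_def)

lemma PQ: "Pm n g * Qm n g = 1\<^sub>m n"
  by (rule mat_mult_left_right_inverse[OF Q_carrier P_carrier QP])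

lemma AP: "map_mat complex_of_real (Qmat n g * circ n c) * Pm n g = Pm n g * Bm n g c"
proof (rule eq_matI)
  have n0: "n > 0" using n3 by simp
  let ?A = "map_mat complex_of_real (Qmat n g * circ n c)"
  have A: "?A \<in> carrier_mat n n" unfolding carrier_mat_def by (simp add: Qmat_def circ_def)
  fix i t assume i: "i < dim_row (Pm n g * Bm n g c)" and t: "t < dim_col (Pm n g * Bm n g c)"
  then have i: "i < n" and t: "t < n" by (auto simp: Pm_def Bm_def)
  have "(?A * Pm n g) $$ (i,t) = (\<Sum>j<n. ?A $$ (i,j) * Pm n g $$ (j,t))"
    by (rule mult_entry[OF A P_carrier i t])
  also have "\<dots> = (\<Sum>j<n. ?A $$ (i,j) * omega n ^ (j * kk n g t))"
    by (rule sum.cong) (use t in \<open>auto simp: Pm_def\<close>)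
  also have "\<dots> = circ_eig n c (kk n g t + 1) * omega n ^ (i * g * kk n g t)"
    by (rule key[OF i])
  finally have L: "(?A * Pm n g) $$ (i,t) = circ_eig n c (kk n g t + 1) * omega n ^ (i * g * kk n g t)" .
  have R: "(Pm n g * Bm n g c) $$ (i,t) = (\<Sum>s<n. omega n ^ (i * kk n g s) * Bm n g c $$ (s,t))"
    using mult_entry[OF P_carrier B_carrier i t] by (rule trans) (rule sum.cong, use i in \<open>auto simp: Pm_def\<close>)
  show "(?A * Pm n g) $$ (i,t) = (Pm n g * Bm n g c) $$ (i,t)"
  proof (cases "t = 0")
    case True
    have "(\<Sum>s<n. omega n ^ (i * kk n g s) * Bm n g c $$ (s,t))
        = (\<Sum>s<n. if s = 0 then circ_eig n c 1 else 0)"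
      by (rule sum.cong) (use True t in \<open>auto simp: Bm_def kk_def\<close>)
    also have "\<dots> = circ_eig n c 1" using n0 by simp
    finally show ?thesis unfolding L R using True by (simp add: kk_def)
  next
    case False
    define s0 where "s0 = Suc (t mod (n - 1))"
    have "t mod (n - 1) < n - 1" using n3 by simp
    then have s0: "s0 < n" unfolding s0_def by simp
    have Bst: "Bm n g c $$ (s,t) = (if s = s0 then ww n g c (t - 1) else 0)" if "s < n" for s
      using that t False unfolding Bm_def s0_def by simp
    have "(\<Sum>s<n. omega n ^ (i * kk n g s) * Bm n g c $$ (s,t))
        = (\<Sum>s<n. if s = s0 then omega n ^ (i * kk n g s0) * ww n g c (t - 1) else 0)"
      by (rule sum.cong) (simp_all add: Bst)
    also have "\<dots> = omega n ^ (i * kk n g s0) * ww n g c (t - 1)" using s0 by simp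
    finally have R': "(Pm n g * Bm n g c) $$ (i,t) = omega n ^ (i * kk n g s0) * ww n g c (t - 1)"
      using R by simp
    have kt: "kk n g t = g ^ (t - 1) mod n" using False unfolding kk_def by simp
    have ks0: "kk n g s0 = g ^ (t mod (n - 1)) mod n" unfolding kk_def s0_def by simp
    have "(i * g * kk n g t) mod n = (i * kk n g s0) mod n"
    proof -
      have "(i * g * kk n g t) mod n = (i * g * g ^ (t - 1)) mod n"
        unfolding kt by (rule mod_mult_right_eq)
      also have "i * g * g ^ (t - 1) = i * g ^ t"
      proof -
        obtain u where "t = Suc u" using False by (cases t) auto
        then show ?thesis by simp
      qed
      also have "(i * g ^ t) mod n = (i * (g ^ t mod n)) mod n" by (rule mod_mult_right_eq[symmetric])
      also have "g ^ t mod n = g ^ (t mod (n - 1)) mod n" using g_pow_mod False t by simp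
      finally show ?thesis unfolding ks0 .
    qed
    then have "omega n ^ (i * g * kk n g t) = omega n ^ (i * kk n g s0)" by (rule om_cong[OF n0])
    moreover have "ww n g c (t - 1) = circ_eig n c (kk n g t + 1)" unfolding ww_def kt ..
    ultimately show ?thesis unfolding L R' by (simp add: mult.commute)
  qed
qed (auto simp: Pm_def Bm_def Qmat_def circ_def)

lemma charpoly_AB: "char_poly (map_mat complex_of_real (Qmat n g * circ n c)) = char_poly (Bm n g c)"
proof (rule char_poly_similar)
  let ?A = "map_mat complex_of_real (Qmat n g * circ n c)"
  have A: "?A \<in> carrier_mat n n" unfolding carrier_mat_def by (simp add: Qmat_def circ_def)
  have "?A = ?A * (Pm n g * Qm n g)" using A by (simp add: PQ right_mult_one_mat[OF A])
  also have "\<dots> = (?A * Pm n g) * Qm n g" using A P_carrier Q_carrier by (simp add: assoc_mult_mat)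
  also have "\<dots> = Pm n g * Bm n g c * Qm n g" unfolding AP ..
  finally have e: "?A = Pm n g * Bm n g c * Qm n g" .
  show "similar_mat ?A (Bm n g c)" unfolding similar_mat_def similar_mat_wit_def
    using A P_carrier Q_carrier B_carrier PQ QP e by (intro exI[of _ "Pm n g"] exI[of _ "Qm n g"]) (auto simp: Let_def)
qed

lemma B_block: "Bm n g c = four_block_mat (mat 1 1 (\<lambda>_. circ_eig n c 1)) (0\<^sub>m 1 (n-1)) (0\<^sub>m (n-1) 1)
   (mat (n-1) (n-1) (\<lambda>(i,j). if i = Suc j mod (n-1) then ww n g c j else 0))"
proof (rule eq_matI)
  have n3': "1 + (n - 1) = n" using n3 by simp
  fix s t
  assume "s < dim_row (four_block_mat (mat 1 1 (\<lambda>_. circ_eig n c 1)) (0\<^sub>m 1 (n-1)) (0\<^sub>m (n-1) 1)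
   (mat (n-1) (n-1) (\<lambda>(i,j). if i = Suc j mod (n-1) then ww n g c j else 0)))"
     "t < dim_col (four_block_mat (mat 1 1 (\<lambda>_. circ_eig n c 1)) (0\<^sub>m 1 (n-1)) (0\<^sub>m (n-1) 1)
   (mat (n-1) (n-1) (\<lambda>(i,j). if i = Suc j mod (n-1) then ww n g c j else 0)))"
  then have s: "s < n" and t: "t < n" using n3' by auto
  show "Bm n g c $$ (s,t) = four_block_mat (mat 1 1 (\<lambda>_. circ_eig n c 1)) (0\<^sub>m 1 (n-1)) (0\<^sub>m (n-1) 1)
   (mat (n-1) (n-1) (\<lambda>(i,j). if i = Suc j mod (n-1) then ww n g c j else 0)) $$ (s,t)"
  proof (cases "s = 0 \<or> t = 0")
    case True
    then show ?thesis using s t n3' by (auto simp: Bm_def)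
  next
    case False
    then obtain s' t' where st: "s = Suc s'" "t = Suc t'" by (cases s; cases t) auto
    then show ?thesis using s t n3' by (auto simp: Bm_def)
  qed
qed (use n3 in \<open>auto simp: Bm_def\<close>)

lemma charB: "char_poly (Bm n g c) = [:- circ_eig n c 1, 1:] * (monom 1 (n-1) - [:\<Prod>j<n-1. ww n g c j:])"
proof -
  let ?A1 = "mat 1 1 (\<lambda>_. circ_eig n c 1)"
  have A1: "?A1 \<in> carrier_mat 1 1" by simp
  have ut: "upper_triangular ?A1" unfolding upper_triangular_def by simp
  have c1: "char_poly ?A1 = [:- circ_eig n c 1, 1:]"
    using char_poly_upper_triangular[OF A1 ut] by (simp add: diag_mat_def)
  have "char_poly (Bm n g c) = char_poly ?A1 *
      char_poly (mat (n-1) (n-1) (\<lambda>(i,j). if i = Suc j mod (n-1) then ww n g c j else 0))"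
    unfolding B_block by (rule char_poly_four_block_zeros_col) auto
  also have "char_poly (mat (n-1) (n-1) (\<lambda>(i,j). if i = Suc j mod (n-1) then ww n g c j else 0))
     = monom 1 (n-1) - [:\<Prod>j<n-1. ww n g c j:]"
    by (rule charpoly_cycle) (use n3 in simp)
  finally show ?thesis unfolding c1 .
qed

lemma prod_ww: "(\<Prod>j<n-1. ww n g c j) = (\<Prod>k\<in>{0<..<n}. circ_eig n c (k + 1))"
  unfolding ww_def by (rule prod.reindex_bij_betw[OF gen_bij])

lemma conj_eig: assumes "2 \<le> k" "k \<le> n"
  shows "circ_eig n c (n + 2 - k) = cnj (circ_eig n c k)"
proof -
  have n0: "n > 0" using n3 by simp
  have "cnj (circ_eig n c k) = (\<Sum>l = 1..n. complex_of_real (c l) * omega n ^ ((k - 1) * (l - 1) * (n - 1)))"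
    unfolding circ_eig_def cnj_sum
    by (rule sum.cong[OF refl]) (simp only: complex_cnj_mult complex_cnj_complex_of_real om_cnj[OF n0])
  also have "\<dots> = circ_eig n c (n + 2 - k)"
    unfolding circ_eig_def
  proof (rule sum.cong[OF refl])
    fix l assume "l \<in> {1..n}"
    define a where "a = k - 1"
    define b where "b = l - 1"
    have a: "a \<le> n" using assms unfolding a_def by simp
    have e: "n + 2 - k - 1 = n - a" using assms unfolding a_def by simp
    have "[(n - a) * b + a * b = a * b * (n - 1) + a * b] (mod n)"
    proof -
      have "(n - a) * b + a * b = (n - a + a) * b" by (simp only: add_mult_distrib)
      also have "n - a + a = n" using a by simp
      finally have "(n - a) * b + a * b = n * b" .
      moreover have "a * b * (n - 1) + a * b = n * (a * b)" using n0 by (cases n) (auto simp: algebra_simps)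
      ultimately show ?thesis by (simp add: cong_def)
    qed
    then have "[(n - a) * b = a * b * (n - 1)] (mod n)" by (simp only: cong_add_rcancel_nat)
    then have "omega n ^ (a * b * (n - 1)) = omega n ^ ((n - a) * b)"
      by (intro om_cong[OF n0]) (simp add: cong_def)
    then show "complex_of_real (c l) * omega n ^ ((k - 1) * (l - 1) * (n - 1))
        = complex_of_real (c l) * omega n ^ ((n + 2 - k - 1) * (l - 1))"
      unfolding e by (simp add: a_def b_def)
  qed
  finally show ?thesis by simp
qed

lemma prod_beta: "(\<Prod>k\<in>{0<..<n}. circ_eig n c (k + 1))
   = complex_of_real ((\<Prod>k = 2..(n + 1) div 2. cmod (circ_eig n c k)) ^ 2)"
proof -
  define h where "h = (n + 1) div 2"
  have h2: "2 * h = n + 1" unfolding h_def using on by simp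
  let ?L = "\<lambda>k. circ_eig n c k"
  have "(\<Prod>k\<in>{0<..<n}. ?L (k + 1)) = (\<Prod>k\<in>{2..n}. ?L k)"
    by (rule prod.reindex_bij_witness[where i = "\<lambda>k. k - 1" and j = "\<lambda>k. k + 1"]) auto
  also have "{2..n} = {2..h} \<union> {Suc h..n}" using h2 by auto
  also have "(\<Prod>k\<in>{2..h} \<union> {Suc h..n}. ?L k) = (\<Prod>k\<in>{2..h}. ?L k) * (\<Prod>k\<in>{Suc h..n}. ?L k)"
    by (rule prod.union_disjoint) auto
  also have "(\<Prod>k\<in>{Suc h..n}. ?L k) = (\<Prod>k\<in>{2..h}. ?L (n + 2 - k))"
    by (rule prod.reindex_bij_witness[where i = "\<lambda>k. n + 2 - k" and j = "\<lambda>k. n + 2 - k"])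
      (use h2 in auto)
  also have "\<dots> = (\<Prod>k\<in>{2..h}. cnj (?L k))"
    by (rule prod.cong[OF refl], rule conj_eig) (use h2 in auto)
  also have "(\<Prod>k\<in>{2..h}. ?L k) * (\<Prod>k\<in>{2..h}. cnj (?L k)) = (\<Prod>k\<in>{2..h}. ?L k * cnj (?L k))"
    by (rule prod.distrib[symmetric])
  also have "\<dots> = (\<Prod>k\<in>{2..h}. complex_of_real (cmod (?L k) ^ 2))"
    by (rule prod.cong[OF refl]) (rule complex_norm_square[symmetric])
  also have "\<dots> = complex_of_real ((\<Prod>k\<in>{2..h}. cmod (?L k)) ^ 2)"
    by (simp add: prod_power_distrib)
  finally show ?thesis unfolding h_def .
qed

end

theorem mainTheorem6:
  fixes n g :: nat and c :: "nat \<Rightarrow> real"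
  assumes "prime n" and "odd n"
    and "0 < g" and "g < n" and "residue_primroot n g"
  defines "A \<equiv> Qmat n g * circ n c"
    and "\<beta> \<equiv> (\<Prod>k = 2..(n + 1) div 2. cmod (circ_eig n c k)) ^ 2"
    and "\<phi> \<equiv> cis (2 * pi / real (n - 1))"
  shows "char_poly (map_mat complex_of_real A) =
           [:- circ_eig n c 1, 1:] *
           (\<Prod>j < n - 1. [:- (complex_of_real (root (n - 1) \<beta>) * \<phi> ^ j), 1:])"
proof -
  note a = assms(1-5)
  have n3: "n \<ge> 3" by (rule n3[OF a])
  have b0: "\<beta> \<ge> 0" unfolding \<beta>_def by simp
  have phi: "\<phi> = omega (n - 1)" unfolding \<phi>_def omega_def ..
  have "char_poly (map_mat complex_of_real A) = char_poly (Bm n g c)"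
    unfolding A_def by (rule charpoly_AB[OF a])
  also have "\<dots> = [:- circ_eig n c 1, 1:] * (monom 1 (n-1) - [:\<Prod>j<n-1. ww n g c j:])"
    by (rule charB[OF a])
  also have "(\<Prod>j<n-1. ww n g c j) = complex_of_real \<beta>"
    unfolding prod_ww[OF a] prod_beta[OF a] \<beta>_def ..
  also have "monom 1 (n-1) - [:complex_of_real \<beta>:]
      = (\<Prod>j < n - 1. [:- (complex_of_real (root (n - 1) \<beta>) * \<phi> ^ j), 1:])"
  proof -
    have m0: "n - 1 > 0" using n3 by simp
    have r0: "root (n - 1) \<beta> \<ge> 0" using b0 by (rule real_root_ge_zero)
    have "root (n - 1) \<beta> ^ (n - 1) = \<beta>" using m0 b0 by simp
    then show ?thesis using prod_roots_pow[OF m0 r0] unfolding phi by simp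
  qed
  finally show ?thesis .
qed

end
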